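(* Let $k\ge0$ and let $n$ be a positive integer of length $l$ with $k(n)\le k$. Then $$\sum_{\substack{m:\ \mathrm{ld}_l(m)=n\\ k(m)=k}}\frac1m=\sum_{m=0}^{\infty}\frac{v_{k-k(n);m}}{(n+1)^{m+1}},$$ and the right-hand side is a series of positive terms converging geometrically.
   Context: Fix $b\ge2$ and $d\in\{0,\dots,b-1\}$. For an integer $n\ge0$, its length $l(n)$ is the smallest $l\ge0$ with $n<b^l$, and $k(n)$ is the number of occurrences of $d$ in its base-$b$ representation without leading zeros. For $m>0$ of length $q\ge l$, $\mathrm{ld}_l(m)=\lfloor m/b^{q-l}\rfloor$. A string is a finite sequence $X=(d_l,\dots,d_1)$ of digits in $\{0,\dots,b-1\}$ (leading zeros allowed), of length $|X|=l\ge0$; its value is $n(X)=\sum_{i=1}^{l}d_ib^{i-1}$ ($0$ for the empty string). For $k\ge0$, $\mu_k=\sum_{X}b^{-|X|}\delta_{n(X)/b^{|X|}}$, the sum over all strings $X$ containing $d$ exactly $k$ times; it is a finite measure on $[0,1)$ of total mass $b$. The complementary moments are $v_{k;m}=\int_{[0,1)}(1-x)^m\,d\mu_k(x)$ (with $0^0=1$). *)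

theory Defs
  imports "HOL-Analysis.Analysis"
begin

definition len :: "nat \<Rightarrow> nat \<Rightarrow> nat" where
  "len b n = (LEAST l. n < b ^ l)"

definition digits :: "nat \<Rightarrow> nat \<Rightarrow> nat list" where
  "digits b n = map (\<lambda>i. n div b ^ i mod b) [0..<len b n]"

definition kcount :: "nat \<Rightarrow> nat \<Rightarrow> nat \<Rightarrow> nat" where
  "kcount b d n = length (filter (\<lambda>x. x = d) (digits b n))"

definition ld :: "nat \<Rightarrow> nat \<Rightarrow> nat \<Rightarrow> nat" where
  "ld b l m = m div b ^ (len b m - l)"

text \<open>A string (d_l, ..., d_1) is the list [d_l, ..., d_1] (most significant first).\<close>
definition strval :: "nat \<Rightarrow> nat list \<Rightarrow> nat" where
  "strval b X = (\<Sum>i<length X. X ! i * b ^ (length X - 1 - i))"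

definition strs :: "nat \<Rightarrow> nat \<Rightarrow> nat \<Rightarrow> nat list set" where
  "strs b d k = {X. (\<forall>x\<in>set X. x < b) \<and> length (filter (\<lambda>x. x = d) X) = k}"

definition mu :: "nat \<Rightarrow> nat \<Rightarrow> nat \<Rightarrow> real measure" where
  "mu b d k = measure_of UNIV (sets borel)
     (\<lambda>A. nn_integral (count_space (strs b d k)) (\<lambda>X.
        ennreal (1 / real b ^ length X) * indicator A (real (strval b X) / real b ^ length X)))"

definition v :: "nat \<Rightarrow> nat \<Rightarrow> nat \<Rightarrow> nat \<Rightarrow> real" where
  "v b d k m = set_lebesgue_integral (mu b d k) {0..<1} (\<lambda>x. (1 - x) ^ m)"

end

theory Submission
  imports Defs
begin

fun dl :: "nat \<Rightarrow> nat \<Rightarrow> nat \<Rightarrow> nat list" where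
  "dl b 0 x = []"
| "dl b (Suc L) x = x mod b # dl b L (x div b)"

lemma length_dl[simp]: "length (dl b L x) = L"
  by (induction L arbitrary: x) auto

lemma set_dl_less: "b > 0 \<Longrightarrow> y \<in> set (dl b L x) \<Longrightarrow> y < b"
  by (induction L arbitrary: x) auto

lemma nth_dl: "i < L \<Longrightarrow> dl b L x ! i = x div b ^ i mod b"
proof (induction L arbitrary: x i)
  case 0 then show ?case by simp
next
  case (Suc L)
  show ?case
  proof (cases i)
    case 0 then show ?thesis by simp
  next
    case (Suc j)
    with Suc.prems have "j < L" by simp
    with Suc.IH[of j "x div b"] Suc show ?thesis by (simp add: div_mult2_eq)
  qed
qed

lemma digits_dl: "digits b m = dl b (len b m) m"
  unfolding digits_def by (rule nth_equalityI) (auto simp: nth_dl)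

lemma dl_append: "dl b (L + K) x = dl b L x @ dl b K (x div b ^ L)"
  by (induction L arbitrary: x) (auto simp: div_mult2_eq)

lemma strval_snoc: "strval b (X @ [c]) = b * strval b X + c"
proof -
  have "strval b (X @ [c]) = (\<Sum>i<Suc (length X). (X @ [c]) ! i * b ^ (length X - i))"
    unfolding strval_def by simp
  also have "\<dots> = (\<Sum>i<length X. X ! i * b ^ (length X - i)) + c"
    by (simp add: nth_append)
  also have "(\<Sum>i<length X. X ! i * b ^ (length X - i)) = b * strval b X"
    unfolding strval_def sum_distrib_left
    by (rule sum.cong) (auto simp: Suc_diff_Suc power_Suc[symmetric] mult_ac simp del: power_Suc)
  finally show ?thesis .
qed

lemma sv_Cons: "strval b (rev (c # Y)) = c + b * strval b (rev Y)"
  by (simp add: strval_snoc)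

lemma sv_Nil[simp]: "strval b [] = 0"
  by (simp add: strval_def)

lemma sv_dl: "strval b (rev (dl b L x)) = x mod b ^ L"
  by (induction L arbitrary: x) (auto simp: strval_snoc mod_mult2_eq mult_ac)

lemma dl_sv: "\<forall>y\<in>set Y. y < b \<Longrightarrow> dl b (length Y) (strval b (rev Y)) = Y"
  by (induction Y) (auto simp: strval_snoc)

lemma sv_less: "\<forall>y\<in>set Y. y < b \<Longrightarrow> strval b (rev Y) < b ^ length Y"
proof (induction Y)
  case Nil then show ?case by simp
next
  case (Cons c Y)
  then have h1: "strval b (rev Y) + 1 \<le> b ^ length Y" and h2: "c < b" by auto
  have "c + b * strval b (rev Y) < b + b * strval b (rev Y)" using h2 by simp
  also have "\<dots> = b * (strval b (rev Y) + 1)" by simp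
  also have "\<dots> \<le> b * b ^ length Y" using h1 by (rule mult_left_mono) simp
  finally show ?case by (simp add: strval_snoc add.commute)
qed

lemma dl_mod: "b > 0 \<Longrightarrow> dl b L (x mod b ^ L) = dl b L x"
proof -
  assume b: "b > 0"
  have "dl b L (x mod b ^ L) = dl b (length (dl b L x)) (strval b (rev (dl b L x)))"
    by (simp add: sv_dl)
  also have "\<dots> = dl b L x"
    using dl_sv[of "dl b L x" b] set_dl_less[OF b] by auto
  finally show ?thesis .
qed

lemma len_iff:
  assumes "b \<ge> 2"
  shows "x < b ^ l \<longleftrightarrow> len b x \<le> l"
proof -
  have ex: "x < b ^ x"
  proof -
    have "x < 2 ^ x" by (rule less_exp)
    also have "\<dots> \<le> b ^ x" using assms by (simp add: power_mono)
    finally show ?thesis .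
  qed
  have L: "x < b ^ len b x" unfolding len_def by (rule LeastI[of _ x]) (rule ex)
  show ?thesis
  proof
    assume "x < b ^ l"
    then show "len b x \<le> l" unfolding len_def by (rule Least_le)
  next
    assume "len b x \<le> l"
    then have "b ^ len b x \<le> b ^ l" using assms by (simp add: power_increasing)
    with L show "x < b ^ l" by simp
  qed
qed

lemma len_comp:
  assumes b: "b \<ge> 2" and n: "n > 0" and s: "s < b ^ L"
  shows "len b (n * b ^ L + s) = len b n + L"
proof -
  have key: "n * b ^ L + s < b ^ l \<longleftrightarrow> len b n + L \<le> l" for l
  proof
    assume "len b n + L \<le> l"
    have "n < b ^ len b n" using len_iff[OF b] by simp
    then have "n + 1 \<le> b ^ len b n" by simp
    have "n * b ^ L + s < n * b ^ L + b ^ L" using s by simp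
    also have "\<dots> = (n + 1) * b ^ L" by simp
    also have "\<dots> \<le> b ^ len b n * b ^ L" using \<open>n + 1 \<le> _\<close> by (rule mult_right_mono) simp
    also have "\<dots> = b ^ (len b n + L)" by (simp add: power_add)
    also have "\<dots> \<le> b ^ l" using b \<open>len b n + L \<le> l\<close> by (simp add: power_increasing)
    finally show "n * b ^ L + s < b ^ l" .
  next
    assume lt: "n * b ^ L + s < b ^ l"
    show "len b n + L \<le> l"
    proof (rule ccontr)
      assume "\<not> len b n + L \<le> l"
      then have "l < len b n + L" by simp
      show False
      proof (cases "l \<le> L")
        case True
        have "b ^ l \<le> b ^ L" using b True by (simp add: power_increasing)
        also have "\<dots> \<le> n * b ^ L" using n by simp
        finally show False using lt by simp
      next
        case False
        then obtain j where j: "l = L + j" by (metis le_add_diff_inverse nat_le_linear)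
        with \<open>l < len b n + L\<close> have "\<not> len b n \<le> j" by simp
        then have "b ^ j \<le> n" using len_iff[OF b, of n j] by simp
        then have "b ^ j * b ^ L \<le> n * b ^ L" by (rule mult_right_mono) simp
        then have "b ^ l \<le> n * b ^ L" by (simp add: j power_add mult_ac)
        then show False using lt by simp
      qed
    qed
  qed
  show ?thesis
    using key[of "len b (n * b ^ L + s)"] key[of "len b n + L"]
      len_iff[OF b, of "n * b ^ L + s" "len b (n * b ^ L + s)"]
      len_iff[OF b, of "n * b ^ L + s" "len b n + L"]
    by simp
qed


definition cnt :: "nat \<Rightarrow> nat list \<Rightarrow> nat" where
  "cnt d X = length (filter (\<lambda>x. x = d) X)"

definition AA :: "nat \<Rightarrow> nat \<Rightarrow> nat \<Rightarrow> nat \<Rightarrow> nat list set" where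
  "AA b d k L = {X. length X = L \<and> (\<forall>x\<in>set X. x < b) \<and> cnt d X = k}"

lemma finite_AA: "finite (AA b d k L)"
proof (rule finite_subset)
  show "AA b d k L \<subseteq> {xs. set xs \<subseteq> {..<b} \<and> length xs = L}"
    unfolding AA_def by auto
  show "finite {xs. set xs \<subseteq> {..<b} \<and> length xs = L}"
    by (rule finite_lists_length_eq) simp
qed

lemma AA_0: "AA b d k 0 = (if k = 0 then {[]} else {})"
  unfolding AA_def cnt_def by auto

lemma AA_Suc:
  "AA b d k (Suc L) = (if k > 0 \<and> d < b then (Cons d) ` AA b d (k - 1) L else {})
      \<union> (\<lambda>(c, X). c # X) ` (({..<b} - {d}) \<times> AA b d k L)"
proof (intro equalityI subsetI)
  fix Z assume "Z \<in> AA b d k (Suc L)"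
  then obtain c X where Z: "Z = c # X" "length X = L" "c < b" "\<forall>x\<in>set X. x < b"
      "cnt d (c # X) = k"
    unfolding AA_def by (auto simp: length_Suc_conv)
  show "Z \<in> (if k > 0 \<and> d < b then (Cons d) ` AA b d (k - 1) L else {})
      \<union> (\<lambda>(c, X). c # X) ` (({..<b} - {d}) \<times> AA b d k L)"
  proof (cases "c = d")
    case True
    then show ?thesis using Z unfolding AA_def cnt_def by auto
  next
    case False
    then have "(c, X) \<in> ({..<b} - {d}) \<times> AA b d k L"
      using Z unfolding AA_def cnt_def by auto
    then show ?thesis using Z by force
  qed
next
  fix Z assume "Z \<in> (if k > 0 \<and> d < b then (Cons d) ` AA b d (k - 1) L else {})
      \<union> (\<lambda>(c, X). c # X) ` (({..<b} - {d}) \<times> AA b d k L)"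
  then show "Z \<in> AA b d k (Suc L)"
    unfolding AA_def cnt_def by (auto split: if_splits)
qed

lemma card_AA_Suc:
  assumes "d < b"
  shows "card (AA b d k (Suc L)) =
    (if k > 0 then card (AA b d (k - 1) L) else 0) + (b - 1) * card (AA b d k L)"
proof -
  let ?P = "(if k > 0 \<and> d < b then (Cons d) ` AA b d (k - 1) L else {})"
  let ?Q = "(\<lambda>(c, X). c # X) ` (({..<b} - {d}) \<times> AA b d k L)"
  have fin: "finite ?P" "finite ?Q" using finite_AA by auto
  have disj: "?P \<inter> ?Q = {}" by auto
  have cP: "card ?P = (if k > 0 then card (AA b d (k - 1) L) else 0)"
    using assms by (auto simp: card_image)
  have inj: "inj_on (\<lambda>(c, X). c # X) (({..<b} - {d}) \<times> AA b d k L)"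
    by (auto simp: inj_on_def)
  have cQ: "card ?Q = (b - 1) * card (AA b d k L)"
    using assms by (simp add: card_image[OF inj] card_cartesian_product)
  show ?thesis
    unfolding AA_Suc using card_Un_disjoint[OF fin disj] cP cQ by simp
qed

definition GG :: "nat \<Rightarrow> nat \<Rightarrow> nat \<Rightarrow> nat \<Rightarrow> real" where
  "GG b d k M = (\<Sum>L\<le>M. real (card (AA b d k L)) / real b ^ L)"

lemma GG_le:
  assumes b: "b \<ge> 2" and d: "d < b"
  shows "GG b d k M \<le> real b"
proof (induction M arbitrary: k)
  case 0
  show ?case using b by (simp add: GG_def AA_0)
next
  case (Suc M)
  have bpos: "real b > 0" using b by simp
  have "GG b d k (Suc M) = real (card (AA b d k 0))
     + (\<Sum>L\<le>M. real (card (AA b d k (Suc L))) / real b ^ Suc L)"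
    unfolding GG_def by (subst sum.atMost_Suc_shift) simp
  also have "(\<Sum>L\<le>M. real (card (AA b d k (Suc L))) / real b ^ Suc L)
     = (if k > 0 then GG b d (k - 1) M / real b else 0) + (real b - 1) / real b * GG b d k M"
  proof -
    have e: "real (card (AA b d k (Suc L))) / real b ^ Suc L =
       (if k > 0 then real (card (AA b d (k-1) L)) / real b ^ L / real b else 0)
       + (real b - 1) / real b * (real (card (AA b d k L)) / real b ^ L)" for L
    proof -
      have c: "real (card (AA b d k (Suc L))) = (if k > 0 then real (card (AA b d (k-1) L)) else 0)
         + (real b - 1) * real (card (AA b d k L))"
        using b by (simp add: card_AA_Suc[OF d] of_nat_diff)
      show ?thesis unfolding c using bpos
        by (simp add: add_divide_distrib)
    qed
    show ?thesis unfolding e GG_def sum.distrib sum_distrib_left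
      by (cases "k > 0") (simp_all add: sum_divide_distrib)
  qed
  finally have eq: "GG b d k (Suc M) = real (card (AA b d k 0)) +
     ((if k > 0 then GG b d (k - 1) M / real b else 0) + (real b - 1) / real b * GG b d k M)" .
  have t1: "(if k > 0 then GG b d (k - 1) M / real b else 0) \<le> (if k > 0 then 1 else 0)"
    using Suc.IH[of "k - 1"] bpos by (auto simp: divide_le_eq)
  have t2: "(real b - 1) / real b * GG b d k M \<le> (real b - 1) / real b * real b"
    using Suc.IH[of k] b by (intro mult_left_mono) auto
  have t3: "(real b - 1) / real b * real b = real b - 1" using bpos by simp
  show ?case using eq t1 t2 t3 by (simp add: AA_0 split: if_splits)
qed

definition ww :: "nat \<Rightarrow> nat list \<Rightarrow> real" where
  "ww b X = 1 / real b ^ length X"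

lemma strs_AA: "strs b d k = (\<Union>L. AA b d k L)"
  unfolding strs_def AA_def cnt_def by auto

lemma mass_finite_sums:
  assumes b: "b \<ge> 2" and d: "d < b" and F: "finite F" "F \<subseteq> strs b d k"
  shows "sum (ww b) F \<le> real b"
proof -
  define M where "M = Max (length ` F)"
  have sub: "F \<subseteq> (\<Union>L\<in>{..M}. AA b d k L)"
  proof
    fix X assume X: "X \<in> F"
    then have "length X \<le> M" unfolding M_def using F by (intro Max_ge) auto
    moreover have "X \<in> AA b d k (length X)" using X F unfolding strs_def AA_def cnt_def by auto
    ultimately show "X \<in> (\<Union>L\<in>{..M}. AA b d k L)" by auto
  qed
  have "sum (ww b) F \<le> sum (ww b) (\<Union>L\<in>{..M}. AA b d k L)"
    by (rule sum_mono2) (use sub finite_AA in \<open>auto simp: ww_def\<close>)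
  also have "\<dots> = (\<Sum>L\<le>M. sum (ww b) (AA b d k L))"
    apply (rule sum.UNION_disjoint)
      apply (simp_all add: finite_AA)
    apply (auto simp: AA_def)
    done
  also have "\<dots> = GG b d k M"
    unfolding GG_def
    by (rule sum.cong) (auto simp: ww_def AA_def)
  also have "\<dots> \<le> real b" by (rule GG_le[OF b d])
  finally show ?thesis .
qed

lemma mass_summable:
  assumes b: "b \<ge> 2" and d: "d < b"
  shows "ww b summable_on strs b d k" and "infsum (ww b) (strs b d k) \<le> real b"
proof -
  show s: "ww b summable_on strs b d k"
    by (rule nonneg_bdd_above_summable_on)
       (use mass_finite_sums[OF b d] in \<open>auto simp: ww_def bdd_above_def\<close>)
  show "infsum (ww b) (strs b d k) \<le> real b"
    by (rule infsum_le_finite_sums[OF s]) (use mass_finite_sums[OF b d] in auto)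
qed


definition yy :: "nat \<Rightarrow> nat list \<Rightarrow> real" where
  "yy b X = real (strval b X) / real b ^ length X"

lemma strval_less:
  assumes "\<forall>x\<in>set X. x < b"
  shows "strval b X < b ^ length X"
  using sv_less[of "rev X" b] assms by simp

lemma yy_range:
  assumes "b \<ge> 2" "\<forall>x\<in>set X. x < b"
  shows "0 \<le> yy b X" "yy b X < 1"
proof -
  have "real (strval b X) < real (b ^ length X)"
    using strval_less[OF assms(2)] by (simp only: of_nat_less_iff)
  then show "yy b X < 1" unfolding yy_def using assms(1) by (simp add: divide_less_eq)
  show "0 \<le> yy b X" unfolding yy_def by simp
qed

definition NN :: "nat \<Rightarrow> nat \<Rightarrow> nat \<Rightarrow> real measure" where
  "NN b d k = distr (density (count_space (strs b d k)) (\<lambda>X. ennreal (ww b X))) borel (yy b)"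

lemma mu_NN: "mu b d k = NN b d k"
proof -
  let ?S = "strs b d k"
  have meas: "yy b \<in> measurable (density (count_space ?S) (\<lambda>X. ennreal (ww b X))) borel"
    by simp
  have "NN b d k = measure_of UNIV (sets borel) (emeasure (NN b d k))"
    by (metis NN_def measure_of_of_measure space_distr sets_distr space_borel)
  also have "\<dots> = mu b d k"
    unfolding mu_def
  proof (rule measure_of_eq)
    show "sets borel \<subseteq> Pow UNIV" by simp
    fix a :: "real set" assume "a \<in> sigma_sets UNIV (sets borel)"
    then have a: "a \<in> sets borel" by (metis sets.sigma_sets_eq space_borel)
    have "emeasure (NN b d k) a
        = emeasure (density (count_space ?S) (\<lambda>X. ennreal (ww b X))) (yy b -` a \<inter> ?S)"
      unfolding NN_def by (subst emeasure_distr[OF meas a]) simp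
    also have "\<dots> = (\<integral>\<^sup>+ X. ennreal (ww b X) * indicator (yy b -` a \<inter> ?S) X \<partial>count_space ?S)"
      by (rule emeasure_density) auto
    also have "\<dots> = (\<integral>\<^sup>+ X. ennreal (1 / real b ^ length X) *
                indicator a (real (strval b X) / real b ^ length X) \<partial>count_space ?S)"
      by (rule nn_integral_cong) (auto simp: ww_def yy_def indicator_def)
    finally show "emeasure (NN b d k) a = (\<integral>\<^sup>+ X. ennreal (1 / real b ^ length X) *
                indicator a (real (strval b X) / real b ^ length X) \<partial>count_space ?S)" .
  qed
  finally show ?thesis by simp
qed

lemma v_eq:
  assumes b: "b \<ge> 2" and d: "d < b"
  shows "v b d k i = infsum (\<lambda>X. ww b X * (1 - yy b X) ^ i) (strs b d k)"
    and "(\<lambda>X. ww b X * (1 - yy b X) ^ i) summable_on (strs b d k)"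
proof -
  let ?S = "strs b d k"
  let ?f = "\<lambda>X. ww b X * (1 - yy b X) ^ i"
  have rng: "X \<in> ?S \<Longrightarrow> 0 \<le> yy b X \<and> yy b X < 1" for X
    using yy_range[OF b] unfolding strs_def by auto
  have wpos: "0 \<le> ww b X" for X unfolding ww_def by simp
  have bnd: "X \<in> ?S \<Longrightarrow> ?f X \<le> ww b X" for X
  proof -
    assume X: "X \<in> ?S"
    have "(1 - yy b X) ^ i \<le> 1" using rng[OF X] by (intro power_le_one) auto
    then show ?thesis using wpos[of X] by (simp add: mult_left_le)
  qed
  have nn: "X \<in> ?S \<Longrightarrow> 0 \<le> ?f X" for X using rng[of X] wpos[of X] by simp
  show sm: "?f summable_on ?S"
    by (rule summable_on_comparison_test[OF mass_summable(1)[OF b d] bnd nn])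
  have "v b d k i = integral\<^sup>L (NN b d k) (\<lambda>x. indicator {0..<1} x *\<^sub>R (1 - x) ^ i)"
    unfolding v_def set_lebesgue_integral_def mu_NN ..
  also have "\<dots> = integral\<^sup>L (density (count_space ?S) (\<lambda>X. ennreal (ww b X)))
        (\<lambda>X. indicator {0..<1} (yy b X) *\<^sub>R (1 - yy b X) ^ i)"
    unfolding NN_def by (rule integral_distr) auto
  also have "\<dots> = integral\<^sup>L (count_space ?S)
        (\<lambda>X. ww b X *\<^sub>R (indicator {0..<1} (yy b X) *\<^sub>R (1 - yy b X) ^ i))"
    by (rule integral_density) (auto simp: wpos)
  also have "\<dots> = integral\<^sup>L (count_space ?S) ?f"
    by (rule Bochner_Integration.integral_cong) (auto simp: rng indicator_def)
  also have "\<dots> = infsetsum ?f ?S" unfolding infsetsum_def ..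
  also have "\<dots> = infsum ?f ?S"
  proof (rule infsetsum_infsum)
    have "(\<lambda>X. norm (?f X)) summable_on ?S"
      using sm by (rule summable_on_cong[THEN iffD1, rotated]) (use nn in auto)
    then show "Infinite_Set_Sum.abs_summable_on ?f ?S" using abs_summable_equivalent by blast
  qed
  finally show "v b d k i = infsum ?f ?S" .
qed


lemma kcount_dl: "kcount b d m = cnt d (dl b (len b m) m)"
  unfolding kcount_def cnt_def digits_dl ..

lemma comp_divmod:
  fixes n b L s :: nat
  assumes "s < b ^ L"
  shows "(n * b ^ L + s) div b ^ L = n" "(n * b ^ L + s) mod b ^ L = s"
proof -
  have q: "b ^ L \<noteq> 0" using assms by (cases "b ^ L") auto
  have "(s + n * b ^ L) div b ^ L = n + s div b ^ L" using q by simp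
  then show "(n * b ^ L + s) div b ^ L = n" using assms by (simp add: add.commute)
  have "(s + n * b ^ L) mod b ^ L = s mod b ^ L" by simp
  then show "(n * b ^ L + s) mod b ^ L = s" using assms by (simp add: add.commute)
qed

lemma kcount_comp:
  assumes b: "b \<ge> 2" and n: "n > 0" and s: "s < b ^ L"
  shows "kcount b d (n * b ^ L + s) = cnt d (dl b L s) + kcount b d n"
proof -
  let ?m = "n * b ^ L + s"
  have "kcount b d ?m = cnt d (dl b (L + len b n) ?m)"
    unfolding kcount_dl len_comp[OF b n s] by (simp add: add.commute)
  also have "\<dots> = cnt d (dl b L ?m) + cnt d (dl b (len b n) (?m div b ^ L))"
    unfolding dl_append cnt_def by simp
  also have "dl b L ?m = dl b L s"
    using dl_mod[of b L ?m] b comp_divmod[OF s, of n] by simp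
  also have "?m div b ^ L = n" using comp_divmod[OF s] by simp
  finally show ?thesis by (simp add: kcount_dl)
qed

lemma bij_g:
  assumes b: "b \<ge> 2" and d: "d < b" and n: "n > 0" and kn: "kcount b d n \<le> k"
  shows "bij_betw (\<lambda>X. n * b ^ length X + strval b X) (strs b d (k - kcount b d n))
     {m. m > 0 \<and> len b m \<ge> len b n \<and> ld b (len b n) m = n \<and> kcount b d m = k}"
proof -
  let ?g = "\<lambda>X. n * b ^ length X + strval b X"
  let ?S = "strs b d (k - kcount b d n)"
  have bpos: "b > 0" using b by simp
  have rev_dl: "X \<in> ?S \<Longrightarrow> dl b (length X) (strval b X) = rev X" for X
    using dl_sv[of "rev X" b] unfolding strs_def by simp
  have sl: "X \<in> ?S \<Longrightarrow> strval b X < b ^ length X" for X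
    using strval_less unfolding strs_def by blast
  show ?thesis
  proof (rule bij_betw_imageI)
    show "inj_on ?g ?S"
    proof (rule inj_onI)
      fix X Y assume X: "X \<in> ?S" and Y: "Y \<in> ?S" and eq: "?g X = ?g Y"
      have "len b (?g X) = len b (?g Y)" using eq by simp
      then have L: "length X = length Y"
        using len_comp[OF b n sl[OF X]] len_comp[OF b n sl[OF Y]] by simp
      then have "strval b X = strval b Y" using eq by simp
      then have "rev X = rev Y" using rev_dl[OF X] rev_dl[OF Y] L by metis
      then show "X = Y" by simp
    qed
    show "?g ` ?S = {m. m > 0 \<and> len b m \<ge> len b n \<and> ld b (len b n) m = n \<and> kcount b d m = k}"
    proof (intro equalityI subsetI)
      fix m assume "m \<in> ?g ` ?S"
      then obtain X where X: "X \<in> ?S" and m: "m = ?g X" by blast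
      have lm: "len b m = len b n + length X" using len_comp[OF b n sl[OF X]] m by simp
      have "m > 0" using m n bpos by simp
      moreover have "len b m \<ge> len b n" using lm by simp
      moreover have "ld b (len b n) m = n"
        unfolding ld_def lm using comp_divmod[OF sl[OF X]] m by simp
      moreover have "kcount b d m = k"
      proof -
        have "kcount b d m = cnt d (rev X) + kcount b d n"
          using kcount_comp[OF b n sl[OF X], of d] rev_dl[OF X] m by simp
        also have "cnt d (rev X) = k - kcount b d n"
          using X unfolding strs_def cnt_def by (simp add: rev_filter[symmetric])
        finally show ?thesis using kn by simp
      qed
      ultimately show "m \<in> {m. m > 0 \<and> len b m \<ge> len b n \<and> ld b (len b n) m = n \<and> kcount b d m = k}"
        by blast
    next
      fix m assume "m \<in> {m. m > 0 \<and> len b m \<ge> len b n \<and> ld b (len b n) m = n \<and> kcount b d m = k}"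
      then have m: "len b m \<ge> len b n" "ld b (len b n) m = n" "kcount b d m = k" by auto
      define L where "L = len b m - len b n"
      define s where "s = m mod b ^ L"
      have nd: "m div b ^ L = n" using m(2) unfolding ld_def L_def .
      have ms: "m = n * b ^ L + s" unfolding s_def using nd by (metis div_mult_mod_eq)
      have sL: "s < b ^ L" unfolding s_def using bpos by simp
      define X where "X = rev (dl b L s)"
      have lX: "length X = L" unfolding X_def by simp
      have svX: "strval b X = s" unfolding X_def sv_dl using sL by simp
      have "kcount b d m = cnt d (dl b L s) + kcount b d n"
        using kcount_comp[OF b n sL, of d] ms by simp
      then have "cnt d X = k - kcount b d n"
        unfolding X_def using m(3) by (simp add: cnt_def rev_filter[symmetric])
      moreover have "\<forall>x\<in>set X. x < b" unfolding X_def using set_dl_less[OF bpos] by auto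
      ultimately have "X \<in> ?S" unfolding strs_def cnt_def by auto
      moreover have "m = ?g X" using ms lX svX by simp
      ultimately show "m \<in> ?g ` ?S" by blast
    qed
  qed
qed


lemma inner_sum:
  assumes b: "b \<ge> 2" and n: "n > 0" and X: "\<forall>x\<in>set X. x < b"
  shows "((\<lambda>i. ww b X * (1 - yy b X) ^ i / (real n + 1) ^ (i + 1)) has_sum
          (1 / real (n * b ^ length X + strval b X))) UNIV"
proof -
  define q where "q = 1 - yy b X"
  define N where "N = real n + 1"
  define B where "B = real b ^ length X"
  have Bpos: "B > 0" unfolding B_def using b by simp
  have q: "0 < q" "q \<le> 1" using yy_range[OF b X] unfolding q_def by auto
  have N: "N \<ge> 2" unfolding N_def using n by simp
  have qN: "norm (q / N) < 1" using q N by simp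
  have "(\<lambda>i. ww b X / N * (q / N) ^ i) sums (ww b X / N * (1 / (1 - q / N)))"
    by (rule sums_mult[OF geometric_sums[OF qN]])
  moreover have "ww b X / N * (q / N) ^ i = ww b X * (1 - yy b X) ^ i / (real n + 1) ^ (i + 1)" for i
    unfolding q_def N_def by (simp add: power_divide)
  moreover have "ww b X / N * (1 / (1 - q / N)) = 1 / real (n * b ^ length X + strval b X)"
  proof -
    have "N - q = real n + real (strval b X) / B" unfolding N_def q_def yy_def B_def by simp
    have "ww b X / N * (1 / (1 - q / N)) = (1 / B) / (N - q)"
      unfolding ww_def B_def[symmetric] using N q by (simp add: field_simps)
    also have "\<dots> = 1 / (real n * B + real (strval b X))"
      unfolding \<open>N - q = _\<close> using Bpos by (simp add: field_simps)
    also have "\<dots> = 1 / real (n * b ^ length X + strval b X)" unfolding B_def by simp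
    finally show ?thesis .
  qed
  ultimately have "(\<lambda>i. ww b X * (1 - yy b X) ^ i / (real n + 1) ^ (i + 1)) sums
          (1 / real (n * b ^ length X + strval b X))" by simp
  then show ?thesis
    by (rule sums_nonneg_imp_has_sum) (use q in \<open>auto simp: ww_def q_def\<close>)
qed

theorem mainTheorem7:
  fixes b d k n :: nat
  assumes "b \<ge> 2" and "d < b" and "n > 0" and "kcount b d n \<le> k"
  shows "((\<lambda>m. 1 / real m) has_sum
            (\<Sum>m. v b d (k - kcount b d n) m / (real n + 1) ^ (m + 1)))
          {m. m > 0 \<and> len b m \<ge> len b n \<and> ld b (len b n) m = n \<and> kcount b d m = k}
       \<and> (\<forall>m. v b d (k - kcount b d n) m / (real n + 1) ^ (m + 1) > 0)
       \<and> (\<exists>C r. 0 < r \<and> r < 1 \<and>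
            (\<forall>m. v b d (k - kcount b d n) m / (real n + 1) ^ (m + 1) \<le> C * r ^ m))"
proof -
  note b = assms(1) and d = assms(2) and n = assms(3) and kn = assms(4)
  define k' where "k' = k - kcount b d n"
  define S where "S = strs b d k'"
  define g where "g = (\<lambda>X. n * b ^ length X + strval b X)"
  define a where "a = (\<lambda>X i. ww b X * (1 - yy b X) ^ i / (real n + 1) ^ (i + 1))"
  define c where "c = (\<lambda>i. v b d k' i / (real n + 1) ^ (i + 1))"
  have Sdig: "X \<in> S \<Longrightarrow> \<forall>x\<in>set X. x < b" for X unfolding S_def strs_def by auto
  have rng: "X \<in> S \<Longrightarrow> 0 \<le> yy b X \<and> yy b X < 1" for X using yy_range[OF b] Sdig by blast
  have wpos: "0 < ww b X" for X unfolding ww_def using b by simp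
  have inner: "X \<in> S \<Longrightarrow> ((\<lambda>i. a X i) has_sum (1 / real (g X))) UNIV" for X
    unfolding a_def g_def using inner_sum[OF b n Sdig] by blast
  have anonneg: "X \<in> S \<Longrightarrow> 0 \<le> a X i" for X i
    unfolding a_def using rng[of X] wpos[of X] by simp
  have gsum: "(\<lambda>X. 1 / real (g X)) summable_on S"
  proof (rule summable_on_comparison_test)
    show "ww b summable_on S" unfolding S_def by (rule mass_summable(1)[OF b d])
    fix X assume X: "X \<in> S"
    have "b ^ length X \<le> n * b ^ length X" using n by simp
    then have "b ^ length X \<le> g X" unfolding g_def by linarith
    then have "real (b ^ length X) \<le> real (g X)" by (simp only: of_nat_le_iff)
    then have "real b ^ length X \<le> real (g X)" by simp
    moreover have bp: "0 < real b ^ length X" using b by simp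
    ultimately have gp: "0 < real (g X)" by linarith
    show "1 / real (g X) \<le> ww b X"
      unfolding ww_def using bp gp \<open>real b ^ length X \<le> real (g X)\<close>
      by (intro divide_left_mono) (auto intro: mult_pos_pos)
    show "0 \<le> 1 / real (g X)" by simp
  qed
  have sig: "(\<lambda>(X, i). a X i) summable_on (S \<times> UNIV)"
    using summable_on_SigmaI[where f = "\<lambda>(X, i). a X i" and A = S and B = "\<lambda>_. UNIV"
        and g = "\<lambda>X. 1 / real (g X)"] inner gsum anonneg by auto
  define T where "T = infsum (\<lambda>(X, i). a X i) (S \<times> UNIV)"
  have hT: "((\<lambda>(X, i). a X i) has_sum T) (S \<times> UNIV)" unfolding T_def using sig by (rule has_sum_infsum)
  have h1: "((\<lambda>X. 1 / real (g X)) has_sum T) S"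
    by (rule has_sum_SigmaD[OF hT]) (use inner in auto)
  have hT2: "((\<lambda>(i, X). a X i) has_sum T) (UNIV \<times> S)"
    using hT has_sum_swap[where f = "\<lambda>(X, i). a X i" and S = T and A = S and B = UNIV] by simp
  have col: "((\<lambda>X. a X i) has_sum c i) S" for i
  proof -
    have "((\<lambda>X. ww b X * (1 - yy b X) ^ i) has_sum v b d k' i) S"
      unfolding S_def v_eq(1)[OF b d] by (rule has_sum_infsum[OF v_eq(2)[OF b d]])
    then show ?thesis unfolding a_def c_def by (rule has_sum_divide_const)
  qed
  have h2: "(c has_sum T) UNIV"
    by (rule has_sum_SigmaD[OF hT2]) (use col in auto)
  then have "c sums T" by (rule has_sum_imp_sums)
  then have sumc: "(\<Sum>i. c i) = T" by (rule sums_unique[symmetric])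
  have bij: "bij_betw g S {m. m > 0 \<and> len b m \<ge> len b n \<and> ld b (len b n) m = n \<and> kcount b d m = k}"
    unfolding g_def S_def k'_def by (rule bij_g[OF b d n kn])
  have part1: "((\<lambda>m. 1 / real m) has_sum (\<Sum>i. c i))
      {m. m > 0 \<and> len b m \<ge> len b n \<and> ld b (len b n) m = n \<and> kcount b d m = k}"
    using has_sum_reindex_bij_betw[OF bij, of "\<lambda>m. 1 / real m" T] h1 sumc by simp
  have vpos: "v b d k' i > 0" for i
  proof -
    let ?f = "\<lambda>X. ww b X * (1 - yy b X) ^ i"
    define X0 where "X0 = replicate k' d"
    have X0: "X0 \<in> S" unfolding X0_def S_def strs_def using d by auto
    have sm: "?f summable_on S" unfolding S_def by (rule v_eq(2)[OF b d])
    have fpos: "?f X0 > 0" using rng[OF X0] wpos[of X0] by simp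
    have "infsum ?f {X0} \<le> infsum ?f S"
      by (rule infsum_mono_neutral) (use sm X0 rng wpos in \<open>auto intro: less_imp_le\<close>)
    then have "?f X0 \<le> infsum ?f S" by simp
    then show ?thesis unfolding S_def v_eq(1)[OF b d] using fpos by simp
  qed
  have part2: "\<forall>i. c i > 0" unfolding c_def using vpos by simp
  have vle: "v b d k' i \<le> real b" for i
  proof -
    let ?f = "\<lambda>X. ww b X * (1 - yy b X) ^ i"
    have sm: "?f summable_on S" unfolding S_def by (rule v_eq(2)[OF b d])
    have "infsum ?f S \<le> infsum (ww b) S"
    proof (rule infsum_mono[OF sm])
      show "ww b summable_on S" unfolding S_def by (rule mass_summable(1)[OF b d])
      fix X assume X: "X \<in> S"
      have "(1 - yy b X) ^ i \<le> 1" using rng[OF X] by (intro power_le_one) auto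
      then show "?f X \<le> ww b X" using wpos[of X] by (simp add: mult_left_le)
    qed
    also have "\<dots> \<le> real b" unfolding S_def by (rule mass_summable(2)[OF b d])
    finally show ?thesis unfolding S_def v_eq(1)[OF b d] .
  qed
  have part3: "\<exists>C r. 0 < r \<and> r < 1 \<and> (\<forall>i. c i \<le> C * r ^ i)"
  proof (intro exI conjI allI)
    show "0 < 1 / (real n + 1)" by simp
    show "1 / (real n + 1) < 1" using n by simp
    fix i
    have "c i \<le> real b / (real n + 1) ^ (i + 1)"
      unfolding c_def by (rule divide_right_mono[OF vle]) simp
    also have "\<dots> = real b / (real n + 1) * (1 / (real n + 1)) ^ i"
      by (simp add: power_one_over field_simps)
    finally show "c i \<le> real b / (real n + 1) * (1 / (real n + 1)) ^ i" .
  qed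
  show ?thesis using part1 part2 part3 unfolding c_def k'_def by blast
qed

end
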